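(* Let $K_n=(V,E)$ be the complete graph and let $M_1,M_2$ be matchings in $K_n$ with $M_1\not\subseteq M_2$ and $M_2\not\subseteq M_1$. Then either the graph $(V,M_1\triangle M_2)$ has at most two (possibly trivial) connected components, or $\bm{c}=\chi(M_1)-\chi(M_2)$ is a circuit of the Matching polytope $P_{\mathrm{match}}(n)=\operatorname{conv}\{\chi(M): M\text{ a matching in }K_n\}$, with circuits taken with respect to the linear description $$\bm{x}(E[S])\le (|S|-1)/2 \ \text{for all } S\subseteq V,\ |S| \text{ odd},\ |S|\ge 3;\quad \bm{x}(\delta(v))\le 1\ \text{for all } v\in V;\quad \bm{x}\ge \bm{0}.$$
   Context: $\chi(M)\in\{0,1\}^E$ is the characteristic vector of $M$; $\triangle$ is symmetric difference; a trivial component is a single node; $E[S]$ is the set of edges with both endpoints in $S$, $\delta(v)$ the set of edges incident to $v$, $\bm{x}(F)=\sum_{e\in F}x_e$. Circuits: for a polytope $P=\{\bm{x}: B\bm{x}\le \bm{d}\}$ given by a fixed linear system, a nonzero vector $\bm{g}$ is a circuit of $P$ if $\operatorname{supp}(B\bm{g})$ is inclusion-minimal among the sets $\operatorname{supp}(B\bm{y})$ with $\bm{y}\neq\bm{0}$. *)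

theory Defs
  imports Complex_Main
begin

definition Vn :: "nat \<Rightarrow> nat set" where
  "Vn n = {0..<n}"

definition En :: "nat \<Rightarrow> nat set set" where
  "En n = {e. e \<subseteq> Vn n \<and> card e = 2}"

definition is_matching :: "nat \<Rightarrow> nat set set \<Rightarrow> bool" where
  "is_matching n M \<longleftrightarrow> M \<subseteq> En n \<and> (\<forall>e\<in>M. \<forall>f\<in>M. e \<noteq> f \<longrightarrow> e \<inter> f = {})"

definition chi :: "nat set set \<Rightarrow> nat set \<Rightarrow> real" where
  "chi M e = (if e \<in> M then 1 else 0)"

definition edges_in :: "nat \<Rightarrow> nat set \<Rightarrow> nat set set" where
  "edges_in n S = {e \<in> En n. e \<subseteq> S}"

definition delta :: "nat \<Rightarrow> nat \<Rightarrow> nat set set" where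
  "delta n v = {e \<in> En n. v \<in> e}"

text \<open>Rows of the linear system B x <= d describing the matching polytope.\<close>
datatype row = OddSet "nat set" | Degree nat | NonNeg "nat set"

definition valid_row :: "nat \<Rightarrow> row \<Rightarrow> bool" where
  "valid_row n r = (case r of
      OddSet S \<Rightarrow> S \<subseteq> Vn n \<and> odd (card S) \<and> card S \<ge> 3
    | Degree v \<Rightarrow> v \<in> Vn n
    | NonNeg e \<Rightarrow> e \<in> En n)"

text \<open>(B y)_r; the nonnegativity constraint x_e >= 0 is the row -x_e <= 0.\<close>
definition row_val :: "nat \<Rightarrow> row \<Rightarrow> (nat set \<Rightarrow> real) \<Rightarrow> real" where
  "row_val n r y = (case r of
      OddSet S \<Rightarrow> sum y (edges_in n S)
    | Degree v \<Rightarrow> sum y (delta n v)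
    | NonNeg e \<Rightarrow> - y e)"

definition supp_B :: "nat \<Rightarrow> (nat set \<Rightarrow> real) \<Rightarrow> row set" where
  "supp_B n y = {r. valid_row n r \<and> row_val n r y \<noteq> 0}"

text \<open>Vectors in R^E are functions on edge sets; only values on En n matter.
  A vector is nonzero iff it is nonzero at some edge of K_n.\<close>
definition nonzero_vec :: "nat \<Rightarrow> (nat set \<Rightarrow> real) \<Rightarrow> bool" where
  "nonzero_vec n y \<longleftrightarrow> (\<exists>e\<in>En n. y e \<noteq> 0)"

definition is_circuit_match :: "nat \<Rightarrow> (nat set \<Rightarrow> real) \<Rightarrow> bool" where
  "is_circuit_match n g \<longleftrightarrow> nonzero_vec n g \<and>
     (\<forall>y. nonzero_vec n y \<longrightarrow> \<not> (supp_B n y \<subset> supp_B n g))"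

definition conn_rel :: "nat set \<Rightarrow> nat set set \<Rightarrow> (nat \<times> nat) set" where
  "conn_rel V F = {(u, v). u \<in> V \<and> v \<in> V \<and> (\<lambda>a b. {a, b} \<in> F)\<^sup>*\<^sup>* u v}"

definition components :: "nat set \<Rightarrow> nat set set \<Rightarrow> nat set set" where
  "components V F = V // conn_rel V F"

end

theory Submission
  imports Defs
begin

lemma card2_eq: assumes "card g = 2" "card f = 2" "g \<subseteq> f" shows "g = f"
  using assms by (metis card_subset_eq card.infinite zero_neq_numeral)

lemma finite_En: "finite (En n)"
proof -
  have "En n \<subseteq> Pow (Vn n)" by (auto simp: En_def)
  moreover have "finite (Pow (Vn n))" by (simp add: Vn_def)
  ultimately show ?thesis by (rule finite_subset)
qed

lemma match_disj: "is_matching n M \<Longrightarrow> e \<in> M \<Longrightarrow> g \<in> M \<Longrightarrow> g \<noteq> e \<Longrightarrow> g \<inter> e = {}"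
  by (auto simp: is_matching_def)

lemma match_card: "is_matching n M \<Longrightarrow> e \<in> M \<Longrightarrow> card e = 2"
  by (auto simp: is_matching_def En_def)

lemma Dedges:
  assumes m1: "is_matching n M1" and m2: "is_matching n M2"
   and e: "e \<in> M1" "e \<notin> M2" and f: "f \<in> M2" "f \<notin> M1"
   and g: "g \<in> (M1 - M2) \<union> (M2 - M1)" and sub: "g \<subseteq> e \<union> f"
  shows "g = e \<or> g = f"
proof -
  have ce: "card e = 2" using match_card[OF m1 e(1)] .
  have cf: "card f = 2" using match_card[OF m2 f(1)] .
  show ?thesis
  proof (cases "g \<in> M1")
    case True
    have cg: "card g = 2" using match_card[OF m1 True] .
    show ?thesis
    proof (rule ccontr)
      assume "\<not> ?thesis"
      then have "g \<inter> e = {}" using match_disj[OF m1 e(1) True] by auto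
      hence "g \<subseteq> f" using sub by auto
      hence "g = f" using card2_eq cg cf by auto
      thus False using True f by auto
    qed
  next
    case False
    hence g2: "g \<in> M2" using g by auto
    have cg: "card g = 2" using match_card[OF m2 g2] .
    show ?thesis
    proof (rule ccontr)
      assume "\<not> ?thesis"
      then have "g \<inter> f = {}" using match_disj[OF m2 f(1) g2] by auto
      hence "g \<subseteq> e" using sub by auto
      hence "g = e" using card2_eq cg ce by auto
      thus False using g2 e by auto
    qed
  qed
qed

lemma sum_two:
  assumes "finite A" "e \<in> A" "f \<in> A" "e \<noteq> f" "\<forall>g\<in>A. g \<noteq> e \<and> g \<noteq> f \<longrightarrow> h g = 0"
  shows "sum h A = h e + h f"
proof -
  have "sum h A = sum h {e,f}" using assms by (intro sum.mono_neutral_right) auto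
  thus ?thesis using assms by simp
qed

lemma conn_sym: "(\<lambda>a b. {a,b} \<in> F)\<^sup>*\<^sup>* x y \<Longrightarrow> (\<lambda>a b. {a,b} \<in> F)\<^sup>*\<^sup>* y x"
proof (induction rule: rtranclp_induct)
  case base thus ?case by simp
next
  case (step y z)
  have "{z,y} \<in> F" using step(2) by (simp add: insert_commute)
  hence "(\<lambda>a b. {a,b} \<in> F)\<^sup>*\<^sup>* z y" by (intro r_into_rtranclp) simp
  thus ?case using step(3) by (rule rtranclp_trans)
qed

lemma conn_equiv: "equiv V (conn_rel V F)"
  unfolding equiv_def refl_on_def sym_def trans_def conn_rel_def
  using conn_sym by (auto intro: rtranclp_trans)

lemma conn_edge:
  assumes "g \<in> F" "card g = 2" "x \<in> g" "z \<in> g"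
  shows "(\<lambda>a b. {a,b} \<in> F)\<^sup>*\<^sup>* x z"
proof (cases "x = z")
  case True thus ?thesis by simp
next
  case False
  obtain p q where "g = {p,q}" "p \<noteq> q" using assms(2) by (auto simp: card_2_iff)
  hence "g = {x,z}" using assms False by auto
  thus ?thesis using assms(1) by (intro r_into_rtranclp) simp
qed

lemma comp_le2:
  assumes a: "a \<in> V" and c: "c \<in> V"
  and cov: "\<forall>w\<in>V. (w,a) \<in> conn_rel V F \<or> (w,c) \<in> conn_rel V F"
  shows "card (components V F) \<le> 2"
proof -
  let ?R = "conn_rel V F"
  have eq: "equiv V ?R" by (rule conn_equiv)
  have "components V F \<subseteq> {?R``{a}, ?R``{c}}"
  proof
    fix X assume "X \<in> components V F"
    then obtain w where w: "w \<in> V" "X = ?R``{w}" unfolding components_def by (auto elim: quotientE)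
    then show "X \<in> {?R``{a}, ?R``{c}}" using cov equiv_class_eq[OF eq] by blast
  qed
  hence "card (components V F) \<le> card {?R``{a}, ?R``{c}}" by (intro card_mono) simp_all
  also have "\<dots> \<le> 2" by (cases "?R``{a} = ?R``{c}") auto
  finally show ?thesis .
qed

theorem lemma3:
  fixes n :: nat and M1 M2 :: "nat set set"
  assumes "is_matching n M1" and "is_matching n M2"
    and "\<not> M1 \<subseteq> M2" and "\<not> M2 \<subseteq> M1"
  shows "card (components (Vn n) ((M1 - M2) \<union> (M2 - M1))) \<le> 2
         \<or> is_circuit_match n (\<lambda>e. chi M1 e - chi M2 e)"
proof (cases "card (components (Vn n) ((M1 - M2) \<union> (M2 - M1))) \<le> 2")
  case True thus ?thesis by simp
next
  case False
  let ?D = "(M1 - M2) \<union> (M2 - M1)"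
  let ?c = "\<lambda>e. chi M1 e - chi M2 e"
  let ?R = "(\<lambda>a b. {a,b} \<in> ?D)\<^sup>*\<^sup>*"
  note big = False
  note m1 = assms(1) and m2 = assms(2)
  have M1E: "M1 \<subseteq> En n" and M2E: "M2 \<subseteq> En n" using m1 m2 by (auto simp: is_matching_def)
  have DE: "?D \<subseteq> En n" using M1E M2E by auto
  obtain e0 where e0: "e0 \<in> M1" "e0 \<notin> M2" using assms(3) by auto
  obtain f0 where f0: "f0 \<in> M2" "f0 \<notin> M1" using assms(4) by auto
  have cD: "?c g \<noteq> 0 \<longleftrightarrow> g \<in> ?D" for g by (auto simp: chi_def)
  have c1: "?c g = 1" if "g \<in> M1" "g \<notin> M2" for g using that by (simp add: chi_def)
  have c2: "?c g = -1" if "g \<in> M2" "g \<notin> M1" for g using that by (simp add: chi_def)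
  have "is_circuit_match n ?c"
    unfolding is_circuit_match_def
  proof (intro conjI allI impI)
    show "nonzero_vec n ?c" unfolding nonzero_vec_def using e0 M1E c1 by force
  next
    fix y assume nz: "nonzero_vec n y"
    show "\<not> supp_B n y \<subset> supp_B n ?c"
    proof
      assume ss: "supp_B n y \<subset> supp_B n ?c"
      hence sub: "r \<in> supp_B n y \<Longrightarrow> r \<in> supp_B n ?c" for r by auto
      have Y0: "y g = 0" if "g \<in> En n" "g \<notin> ?D" for g
      proof (rule ccontr)
        assume "y g \<noteq> 0"
        hence "NonNeg g \<in> supp_B n y" using that by (simp add: supp_B_def valid_row_def row_val_def)
        hence "NonNeg g \<in> supp_B n ?c" by (rule sub)
        hence "?c g \<noteq> 0" by (simp add: supp_B_def valid_row_def row_val_def)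
        thus False using that cD by blast
      qed
      have odd: "y e + y f = 0" if e: "e \<in> M1" "e \<notin> M2" and f: "f \<in> M2" "f \<notin> M1"
        and S: "e \<union> f \<subseteq> S" "S \<subseteq> Vn n" "odd (card S)" "card S \<ge> 3"
        and SD: "\<forall>g\<in>?D. g \<subseteq> S \<longrightarrow> g \<subseteq> e \<union> f" for e f S
      proof -
        have ef: "e \<noteq> f" using e f by auto
        have eE: "e \<in> edges_in n S" "f \<in> edges_in n S" using e f S M1E M2E by (auto simp: edges_in_def)
        have fin: "finite (edges_in n S)"
          by (rule finite_subset[OF _ finite_En[of n]]) (auto simp: edges_in_def)
        have only: "g \<notin> ?D" if "g \<in> edges_in n S" "g \<noteq> e" "g \<noteq> f" for g
        proof
          assume gD: "g \<in> ?D"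
          have "g \<subseteq> S" using that by (simp add: edges_in_def)
          hence "g \<subseteq> e \<union> f" using SD gD by blast
          thus False using Dedges[OF m1 m2 e f gD] that by blast
        qed
        have "row_val n (OddSet S) ?c = ?c e + ?c f"
          unfolding row_val_def row.case
          by (rule sum_two[OF fin eE ef]) (use only cD in blast)
        also have "\<dots> = 0" using c1 c2 e f by simp
        finally have "OddSet S \<notin> supp_B n ?c" by (simp add: supp_B_def)
        hence "OddSet S \<notin> supp_B n y" using sub by blast
        hence "row_val n (OddSet S) y = 0" using S by (simp add: supp_B_def valid_row_def)
        moreover have "row_val n (OddSet S) y = y e + y f"
          unfolding row_val_def row.case
          by (rule sum_two[OF fin eE ef]) (use only Y0 in \<open>auto simp: edges_in_def\<close>)
        ultimately show ?thesis by simp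
      qed
      have Y1: "y e + y f = 0" if e: "e \<in> M1" "e \<notin> M2" and f: "f \<in> M2" "f \<notin> M1" for e f
      proof -
        have ce: "card e = 2" using match_card[OF m1 e(1)] .
        have cf: "card f = 2" using match_card[OF m2 f(1)] .
        have fe: "finite e" "finite f" using ce cf by (auto intro: card_ge_0_finite)
        have eV: "e \<subseteq> Vn n" "f \<subseteq> Vn n" using e f M1E M2E by (auto simp: En_def)
        have ef: "e \<noteq> f" using e f by auto
        show ?thesis
        proof (cases "e \<inter> f = {}")
          case False
          have "card (e \<inter> f) \<noteq> 0" using False fe by simp
          moreover have "card (e \<inter> f) \<le> 2" using ce fe by (metis card_mono inf_le1)
          moreover have "card (e \<inter> f) \<noteq> 2"
          proof
            assume "card (e \<inter> f) = 2"
            hence "e \<inter> f = e" using card2_eq ce by auto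
            hence "e \<subseteq> f" by auto
            thus False using card2_eq ce cf ef by auto
          qed
          ultimately have "card (e \<inter> f) = 1" by linarith
          hence c3: "card (e \<union> f) = 3" using card_Un_Int[OF fe] ce cf by simp
          show ?thesis
          proof (rule odd[OF e f, of "e \<union> f"])
            show "\<forall>g\<in>?D. g \<subseteq> e \<union> f \<longrightarrow> g \<subseteq> e \<union> f" by blast
          qed (use c3 eV in auto)
        next
          case True
          have "\<exists>w\<in>Vn n. w \<notin> e \<union> f \<and> (\<forall>g\<in>?D. w \<in> g \<longrightarrow> g \<inter> (e \<union> f) = {})"
          proof (rule ccontr)
            assume nw: "\<not> ?thesis"
            obtain a where a: "a \<in> e" using ce by (auto simp: card_2_iff)
            obtain c where c: "c \<in> f" using cf by (auto simp: card_2_iff)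
            have aV: "a \<in> Vn n" and cV: "c \<in> Vn n" using a c eV by auto
            have eD: "e \<in> ?D" and fD: "f \<in> ?D" using e f by auto
            have ea: "?R x a" if "x \<in> e" for x using conn_edge[OF eD ce that a] .
            have fc: "?R x c" if "x \<in> f" for x using conn_edge[OF fD cf that c] .
            have "card (components (Vn n) ?D) \<le> 2"
            proof (rule comp_le2[OF aV cV], rule ballI)
              fix w assume w: "w \<in> Vn n"
              have "?R w a \<or> ?R w c"
              proof (cases "w \<in> e \<union> f")
                case True thus ?thesis using ea fc by blast
              next
                case False
                then obtain g x where g: "g \<in> ?D" "w \<in> g" "x \<in> g" "x \<in> e \<union> f" using nw w by blast
                have "card g = 2" using g DE by (auto simp: En_def)
                hence "?R w x" using conn_edge[OF g(1) _ g(2) g(3)] by simp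
                thus ?thesis using g(4) ea fc by (meson UnE rtranclp_trans)
              qed
              thus "(w,a) \<in> conn_rel (Vn n) ?D \<or> (w,c) \<in> conn_rel (Vn n) ?D"
                using w aV cV by (auto simp: conn_rel_def)
            qed
            thus False using big by simp
          qed
          then obtain w where w: "w \<in> Vn n" "w \<notin> e \<union> f" "\<forall>g\<in>?D. w \<in> g \<longrightarrow> g \<inter> (e \<union> f) = {}"
            by blast
          have "card (e \<union> f) = 4" using card_Un_disjoint[OF fe True] ce cf by simp
          hence c5: "card (insert w (e \<union> f)) = 5" using w fe by simp
          show ?thesis
          proof (rule odd[OF e f, of "insert w (e \<union> f)"])
            show "\<forall>g\<in>?D. g \<subseteq> insert w (e \<union> f) \<longrightarrow> g \<subseteq> e \<union> f"
            proof (intro ballI impI)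
              fix g assume g: "g \<in> ?D" "g \<subseteq> insert w (e \<union> f)"
              have cg: "card g = 2" using g DE by (auto simp: En_def)
              show "g \<subseteq> e \<union> f"
              proof (rule ccontr)
                assume "\<not> g \<subseteq> e \<union> f"
                hence "w \<in> g" using g by auto
                hence "g \<subseteq> {w}" using w(3) g by auto
                hence "card g \<le> card {w}" by (intro card_mono) simp_all
                hence "card g \<le> 1" by simp
                thus False using cg by simp
              qed
            qed
          qed (use c5 eV w in auto)
        qed
      qed
      define l where "l = y e0"
      have yl: "y g = l * ?c g" if "g \<in> En n" for g
      proof -
        have "y e0 + y f0 = 0" using Y1 e0 f0 by blast
        show ?thesis
        proof (cases "g \<in> ?D")
          case True
          then show ?thesis
          proof
            assume g: "g \<in> M1 - M2"
            have "y g + y f0 = 0" using Y1 g f0 by blast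
            thus ?thesis using \<open>y e0 + y f0 = 0\<close> g c1 l_def by simp
          next
            assume g: "g \<in> M2 - M1"
            have "y e0 + y g = 0" using Y1 g e0 by blast
            thus ?thesis using g c2 l_def by simp
          qed
        next
          case False
          thus ?thesis using Y0 that by (auto simp: chi_def)
        qed
      qed
      have l0: "l \<noteq> 0" using nz yl by (auto simp: nonzero_vec_def)
      have rv: "row_val n r y = l * row_val n r ?c" if "valid_row n r" for r
      proof (cases r)
        case (OddSet S)
        have "sum y (edges_in n S) = sum (\<lambda>g. l * ?c g) (edges_in n S)"
          by (rule sum.cong) (auto simp: edges_in_def yl)
        thus ?thesis using OddSet by (simp add: row_val_def sum_distrib_left)
      next
        case (Degree v)
        have "sum y (delta n v) = sum (\<lambda>g. l * ?c g) (delta n v)"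
          by (rule sum.cong) (auto simp: delta_def yl)
        thus ?thesis using Degree by (simp add: row_val_def sum_distrib_left)
      next
        case (NonNeg g)
        thus ?thesis using that yl by (simp add: row_val_def valid_row_def algebra_simps)
      qed
      have "supp_B n y = supp_B n ?c" using l0 rv by (auto simp: supp_B_def)
      thus False using ss by simp
    qed
  qed
  thus ?thesis by simp
qed

end
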